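(* Consider the store-and-forward packet routing problem on the uni-directional line with $n$ nodes, buffer size $B=0$ at every node and uniform link capacity $c\ge 1$. The nearest-to-go policy is an optimal policy: for every input sequence $\sigma$ of packet requests, the number of packets it delivers equals the maximum throughput achievable on $\sigma$.
   Context: Store-and-forward packet routing model on the uni-directional line $v_1\to v_2\to\cdots\to v_n$: each edge can carry at most $c$ packets per time step and traversing an edge takes one time step; since $B=0$, nodes cannot store packets. Each packet request $r_i=(a_i,b_i,t_i,d_i)$ has source $a_i$, destination $b_i$ equal to $a_i$ or a later node of the path, input time $t_i$ (the packet is input at $a_i$ at time $t_i$ via a local input; any number of packets may be input to a node in a step), and a deadline $d_i$ that is feasible, i.e. $d_i \ge t_i + \mathrm{dist}(a_i,b_i)$ (possibly $d_i=\infty$). In each time step, each node removes (delivers) the packets destined to it, forwards at most $c$ of the remaining present packets (those arriving along the incoming edge and those input locally) along its outgoing edge, and deletes the rest. Throughput = number of packets delivered by their deadline. The nearest-to-go policy: at each node and time step, among the present packets not destined to the node, forward the (at most) $c$ packets whose destinations are nearest to the node and delete the others. *)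

theory Defs
  imports Main "HOL-Library.Extended_Nat"
begin

(* A packet request (a, b, t, d): source node a, destination node b,
   input time t, deadline d (enat, \<infinity> allowed).
   Nodes of the line are 0, ..., n-1; edge v carries packets from v to v+1. *)
record request =
  src :: nat
  dst :: nat
  tin :: nat
  ddl :: enat

definition dist :: "request \<Rightarrow> nat" where
  "dist r = dst r - src r"

definition valid_request :: "nat \<Rightarrow> request \<Rightarrow> bool" where
  "valid_request n r \<longleftrightarrow> src r \<le> dst r \<and> dst r < n \<and> enat (tin r + dist r) \<le> ddl r"

(* With B = 0 a packet can never wait: packet i, if still alive, is at node
   src + k at time tin + k.  A schedule (run of an arbitrary policy) is thus
   described by h i = number of edges packet i traverses before it is
   delivered (h i = dist) or deleted (h i < dist). *)

definition present :: "request list \<Rightarrow> (nat \<Rightarrow> nat) \<Rightarrow> nat \<Rightarrow> nat \<Rightarrow> nat \<Rightarrow> bool" where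
  "present \<sigma> h v \<tau> i \<longleftrightarrow> i < length \<sigma> \<and> src (\<sigma>!i) \<le> v \<and>
     \<tau> = tin (\<sigma>!i) + (v - src (\<sigma>!i)) \<and> v - src (\<sigma>!i) \<le> h i"

definition eligible :: "request list \<Rightarrow> (nat \<Rightarrow> nat) \<Rightarrow> nat \<Rightarrow> nat \<Rightarrow> nat set" where
  "eligible \<sigma> h v \<tau> = {i. present \<sigma> h v \<tau> i \<and> dst (\<sigma>!i) \<noteq> v}"

definition forwarded :: "request list \<Rightarrow> (nat \<Rightarrow> nat) \<Rightarrow> nat \<Rightarrow> nat \<Rightarrow> nat set" where
  "forwarded \<sigma> h v \<tau> = {i. present \<sigma> h v \<tau> i \<and> v - src (\<sigma>!i) < h i}"

definition feasible_schedule :: "nat \<Rightarrow> request list \<Rightarrow> (nat \<Rightarrow> nat) \<Rightarrow> bool" where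
  "feasible_schedule c \<sigma> h \<longleftrightarrow>
     (\<forall>i < length \<sigma>. h i \<le> dist (\<sigma>!i)) \<and>
     (\<forall>v \<tau>. card (forwarded \<sigma> h v \<tau>) \<le> c)"

(* packets delivered by their deadline; packet i reaches dst at time tin + dist *)
definition throughput :: "request list \<Rightarrow> (nat \<Rightarrow> nat) \<Rightarrow> nat" where
  "throughput \<sigma> h = card {i. i < length \<sigma> \<and> h i = dist (\<sigma>!i) \<and>
                                enat (tin (\<sigma>!i) + dist (\<sigma>!i)) \<le> ddl (\<sigma>!i)}"

definition opt_throughput :: "nat \<Rightarrow> request list \<Rightarrow> nat" where
  "opt_throughput c \<sigma> = Max {throughput \<sigma> h | h. feasible_schedule c \<sigma> h}"

definition ntg_run :: "nat \<Rightarrow> request list \<Rightarrow> (nat \<Rightarrow> nat) \<Rightarrow> bool" where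
  "ntg_run c \<sigma> h \<longleftrightarrow> feasible_schedule c \<sigma> h \<and>
     (\<forall>v \<tau>. card (forwarded \<sigma> h v \<tau>) = min c (card (eligible \<sigma> h v \<tau>)) \<and>
        (\<forall>i \<in> forwarded \<sigma> h v \<tau>. \<forall>j \<in> eligible \<sigma> h v \<tau> - forwarded \<sigma> h v \<tau>.
            dst (\<sigma>!i) \<le> dst (\<sigma>!j)))"

end

theory Submission
  imports Defs
begin

section \<open>Selection of nearest packets\<close>

lemma sel_exists:
  fixes f :: "nat \<Rightarrow> nat"
  assumes fin: "finite E" and k: "k \<le> card E"
  shows "\<exists>X. X \<subseteq> E \<and> card X = k \<and> (\<forall>i\<in>X. \<forall>j\<in>E-X. f i \<le> f j)"
  using k
proof (induction k)
  case 0 then show ?case by (intro exI[of _ "{}"]) auto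
next
  case (Suc k)
  then obtain X where X: "X \<subseteq> E" "card X = k" "\<forall>i\<in>X. \<forall>j\<in>E-X. f i \<le> f j" by auto
  have fX: "finite X" using X(1) fin finite_subset by blast
  have "E - X \<noteq> {}"
  proof
    assume "E - X = {}"
    then have "E \<subseteq> X" by blast
    then have "card E \<le> card X" using card_mono fX by blast
    then show False using Suc.prems X(2) by simp
  qed
  then obtain y0 where "y0 \<in> E - X" by blast
  then obtain y where y: "y \<in> E - X" and ymin: "\<forall>z. z \<in> E - X \<longrightarrow> f y \<le> f z"
    using ex_has_least_nat[of "\<lambda>x. x \<in> E - X" y0 f] by blast
  show ?case
  proof (intro exI[of _ "insert y X"] conjI)
    show "insert y X \<subseteq> E" using X(1) y by blast
    show "card (insert y X) = Suc k" using fX y X(2) by simp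
    show "\<forall>i\<in>insert y X. \<forall>j\<in>E - insert y X. f i \<le> f j"
      using ymin X(3) by auto
  qed
qed

definition nsel :: "nat \<Rightarrow> request list \<Rightarrow> nat set \<Rightarrow> nat set" where
  "nsel c \<sigma> E = (SOME X. X \<subseteq> E \<and> card X = min c (card E) \<and>
      (\<forall>i\<in>X. \<forall>j\<in>E-X. dst (\<sigma>!i) \<le> dst (\<sigma>!j)))"

lemma nsel_prop:
  assumes "finite E"
  shows "nsel c \<sigma> E \<subseteq> E \<and> card (nsel c \<sigma> E) = min c (card E) \<and>
      (\<forall>i\<in>nsel c \<sigma> E. \<forall>j\<in>E - nsel c \<sigma> E. dst (\<sigma>!i) \<le> dst (\<sigma>!j))"
proof -
  have "\<exists>X. X \<subseteq> E \<and> card X = min c (card E) \<and> (\<forall>i\<in>X. \<forall>j\<in>E-X. dst (\<sigma>!i) \<le> dst (\<sigma>!j))"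
    using sel_exists[OF assms, of "min c (card E)" "\<lambda>i. dst (\<sigma>!i)"] by simp
  then show ?thesis unfolding nsel_def by (rule someI_ex)
qed

lemma eligible_finite: "finite (eligible \<sigma> g v \<tau>)"
  by (rule finite_subset[of _ "{..<length \<sigma>}"]) (auto simp: eligible_def present_def)

definition trunc :: "nat \<Rightarrow> request list \<Rightarrow> (nat \<Rightarrow> nat) \<Rightarrow> nat \<Rightarrow> nat \<Rightarrow> bool" where
  "trunc c \<sigma> g v i \<longleftrightarrow> i \<in> eligible \<sigma> g v (tin (\<sigma>!i) + (v - src (\<sigma>!i))) \<and>
      i \<notin> nsel c \<sigma> (eligible \<sigma> g v (tin (\<sigma>!i) + (v - src (\<sigma>!i))))"

primrec Hs :: "nat \<Rightarrow> request list \<Rightarrow> nat \<Rightarrow> nat \<Rightarrow> nat" where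
  "Hs c \<sigma> 0 = (\<lambda>i. dist (\<sigma>!i))"
| "Hs c \<sigma> (Suc v) = (\<lambda>i. if trunc c \<sigma> (Hs c \<sigma> v) v i then v - src (\<sigma>!i) else Hs c \<sigma> v i)"

lemma trunc_present:
  "trunc c \<sigma> g v i \<Longrightarrow> i < length \<sigma> \<and> src (\<sigma>!i) \<le> v \<and> v - src (\<sigma>!i) \<le> g i \<and> dst (\<sigma>!i) \<noteq> v"
  by (auto simp: trunc_def eligible_def present_def)

lemma Hs_le: "Hs c \<sigma> v i \<le> dist (\<sigma>!i)"
  by (induction v) (auto dest: trunc_present)

lemma Hs_shape: "Hs c \<sigma> v i = dist (\<sigma>!i) \<or> Hs c \<sigma> v i + src (\<sigma>!i) < v"
  by (induction v) (auto dest: trunc_present)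

lemma Hs_stab:
  assumes "src (\<sigma>!i) \<le> w"
  shows "Hs c \<sigma> (Suc w + k) i = Hs c \<sigma> (Suc w) i \<or>
    (w - src (\<sigma>!i) < Hs c \<sigma> (Suc w + k) i \<and> Hs c \<sigma> (Suc w + k) i \<le> Hs c \<sigma> (Suc w) i)"
proof (induction k)
  case 0 then show ?case by simp
next
  case (Suc k)
  show ?case
  proof (cases "trunc c \<sigma> (Hs c \<sigma> (Suc w + k)) (Suc w + k) i")
    case True
    then have "Suc w + k - src (\<sigma>!i) \<le> Hs c \<sigma> (Suc w + k) i" by (auto dest: trunc_present)
    then show ?thesis using True Suc.IH assms by auto
  next
    case False
    then show ?thesis using Suc.IH by simp
  qed
qed

lemma Hs_stab2:
  assumes "Suc w \<le> N" "src (\<sigma>!i) \<le> w"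
  shows "(w - src (\<sigma>!i) \<le> Hs c \<sigma> N i \<longleftrightarrow> w - src (\<sigma>!i) \<le> Hs c \<sigma> (Suc w) i) \<and>
         (w - src (\<sigma>!i) < Hs c \<sigma> N i \<longleftrightarrow> w - src (\<sigma>!i) < Hs c \<sigma> (Suc w) i)"
proof -
  have N: "N = Suc w + (N - Suc w)" using assms by simp
  show ?thesis using Hs_stab[OF assms(2), of c "N - Suc w"] N by (metis less_imp_le order.strict_trans2)
qed

lemma present_Suc:
  "present \<sigma> (Hs c \<sigma> (Suc w)) w \<tau> i = present \<sigma> (Hs c \<sigma> w) w \<tau> i"
  by (cases "trunc c \<sigma> (Hs c \<sigma> w) w i") (auto simp: present_def dest: trunc_present)

lemma elig_Suc: "eligible \<sigma> (Hs c \<sigma> (Suc w)) w \<tau> = eligible \<sigma> (Hs c \<sigma> w) w \<tau>"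
  unfolding eligible_def using present_Suc by blast

lemma fwd_Suc:
  assumes sd: "\<forall>i<length \<sigma>. src (\<sigma>!i) \<le> dst (\<sigma>!i)"
  shows "forwarded \<sigma> (Hs c \<sigma> (Suc w)) w \<tau> = nsel c \<sigma> (eligible \<sigma> (Hs c \<sigma> w) w \<tau>)"
proof (intro equalityI subsetI)
  fix i assume "i \<in> forwarded \<sigma> (Hs c \<sigma> (Suc w)) w \<tau>"
  then have p: "present \<sigma> (Hs c \<sigma> (Suc w)) w \<tau> i" and lt: "w - src (\<sigma>!i) < Hs c \<sigma> (Suc w) i"
    by (auto simp: forwarded_def)
  have nt: "\<not> trunc c \<sigma> (Hs c \<sigma> w) w i"
  proof
    assume "trunc c \<sigma> (Hs c \<sigma> w) w i"
    then have "Hs c \<sigma> (Suc w) i = w - src (\<sigma>!i)" by simp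
    then show False using lt by simp
  qed
  then have eq: "Hs c \<sigma> (Suc w) i = Hs c \<sigma> w i" by simp
  have p2: "present \<sigma> (Hs c \<sigma> w) w \<tau> i" using p present_Suc by metis
  have "Hs c \<sigma> w i \<le> dst (\<sigma>!i) - src (\<sigma>!i)" using Hs_le dist_def by metis
  then have "dst (\<sigma>!i) \<noteq> w" using lt eq p2 by (auto simp: present_def)
  then have el: "i \<in> eligible \<sigma> (Hs c \<sigma> w) w \<tau>" using p2 by (simp add: eligible_def)
  have tau: "\<tau> = tin (\<sigma>!i) + (w - src (\<sigma>!i))" using p2 by (simp add: present_def)
  show "i \<in> nsel c \<sigma> (eligible \<sigma> (Hs c \<sigma> w) w \<tau>)" using nt el tau by (auto simp: trunc_def)
next
  fix i assume i: "i \<in> nsel c \<sigma> (eligible \<sigma> (Hs c \<sigma> w) w \<tau>)"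
  then have el: "i \<in> eligible \<sigma> (Hs c \<sigma> w) w \<tau>" using nsel_prop[OF eligible_finite] by blast
  then have p: "present \<sigma> (Hs c \<sigma> w) w \<tau> i" and d: "dst (\<sigma>!i) \<noteq> w" by (auto simp: eligible_def)
  have tau: "\<tau> = tin (\<sigma>!i) + (w - src (\<sigma>!i))" using p by (simp add: present_def)
  have nt: "\<not> trunc c \<sigma> (Hs c \<sigma> w) w i" using i tau by (auto simp: trunc_def)
  then have eq: "Hs c \<sigma> (Suc w) i = Hs c \<sigma> w i" by simp
  have sw: "src (\<sigma>!i) \<le> w" "w - src (\<sigma>!i) \<le> Hs c \<sigma> w i" using p by (auto simp: present_def)
  have hd: "Hs c \<sigma> w i = dst (\<sigma>!i) - src (\<sigma>!i)"
    using Hs_shape[of c \<sigma> w i] sw by (auto simp: dist_def)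
  have "i < length \<sigma>" using p by (simp add: present_def)
  then have "src (\<sigma>!i) \<le> dst (\<sigma>!i)" using sd by blast
  then have "w - src (\<sigma>!i) < Hs c \<sigma> (Suc w) i" using eq hd sw d by auto
  moreover have "present \<sigma> (Hs c \<sigma> (Suc w)) w \<tau> i" using p present_Suc by metis
  ultimately show "i \<in> forwarded \<sigma> (Hs c \<sigma> (Suc w)) w \<tau>" by (simp add: forwarded_def)
qed

lemma valid_facts:
  assumes "\<forall>r \<in> set \<sigma>. valid_request n r" "i < length \<sigma>"
  shows "src (\<sigma>!i) \<le> dst (\<sigma>!i) \<and> dst (\<sigma>!i) < n \<and>
         enat (tin (\<sigma>!i) + dist (\<sigma>!i)) \<le> ddl (\<sigma>!i)"
  using assms nth_mem unfolding valid_request_def by blast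

lemma present_empty:
  assumes "\<forall>r \<in> set \<sigma>. valid_request n r" "\<forall>i. g i \<le> dist (\<sigma>!i)" "n \<le> w"
  shows "\<not> present \<sigma> g w \<tau> i \<or> dst (\<sigma>!i) = w"
proof (rule ccontr)
  assume "\<not> (\<not> present \<sigma> g w \<tau> i \<or> dst (\<sigma>!i) = w)"
  then have p: "present \<sigma> g w \<tau> i" by blast
  then have i: "i < length \<sigma>" "src (\<sigma>!i) \<le> w" "w - src (\<sigma>!i) \<le> g i"
    by (auto simp: present_def)
  have "g i \<le> dst (\<sigma>!i) - src (\<sigma>!i)" using assms(2) by (simp add: dist_def)
  then show False using valid_facts[OF assms(1) i(1)] i assms(3) by auto
qed

lemma ntg_exists:
  assumes valid: "\<forall>r \<in> set \<sigma>. valid_request n r"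
  shows "ntg_run c \<sigma> (Hs c \<sigma> n)"
proof -
  define h where "h = Hs c \<sigma> n"
  have sd: "\<forall>i<length \<sigma>. src (\<sigma>!i) \<le> dst (\<sigma>!i)" using valid_facts[OF valid] by blast
  have hle: "\<forall>i. h i \<le> dist (\<sigma>!i)" unfolding h_def using Hs_le by blast
  have key: "eligible \<sigma> h w \<tau> = eligible \<sigma> (Hs c \<sigma> w) w \<tau> \<and>
      forwarded \<sigma> h w \<tau> = nsel c \<sigma> (eligible \<sigma> (Hs c \<sigma> w) w \<tau>)" for w \<tau>
  proof (cases "w < n")
    case True
    then have sw: "Suc w \<le> n" by simp
    have pe: "present \<sigma> h w \<tau> i = present \<sigma> (Hs c \<sigma> (Suc w)) w \<tau> i" for i
      unfolding present_def h_def using Hs_stab2[OF sw, of \<sigma> i c] by blast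
    have fe: "forwarded \<sigma> h w \<tau> = forwarded \<sigma> (Hs c \<sigma> (Suc w)) w \<tau>"
      unfolding forwarded_def present_def h_def using Hs_stab2[OF sw, of \<sigma> _ c] by blast
    have ee: "eligible \<sigma> h w \<tau> = eligible \<sigma> (Hs c \<sigma> (Suc w)) w \<tau>"
      unfolding eligible_def using pe by blast
    show ?thesis using ee fe elig_Suc fwd_Suc[OF sd] by metis
  next
    case False
    have e1: "eligible \<sigma> h w \<tau> = {}"
      using present_empty[OF valid hle, of w] False by (auto simp: eligible_def)
    have e2: "eligible \<sigma> (Hs c \<sigma> w) w \<tau> = {}"
      using present_empty[OF valid, of "Hs c \<sigma> w" w] Hs_le False by (auto simp: eligible_def)
    have f1: "forwarded \<sigma> h w \<tau> = {}"
    proof -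
      { fix i assume "i \<in> forwarded \<sigma> h w \<tau>"
        then have p: "present \<sigma> h w \<tau> i" "w - src (\<sigma>!i) < h i" by (auto simp: forwarded_def)
        then have "i \<in> eligible \<sigma> h w \<tau>"
          using hle[rule_format, of i] by (auto simp: eligible_def present_def dist_def)
        then have False using e1 by blast }
      then show ?thesis by blast
    qed
    have "nsel c \<sigma> {} = {}" using nsel_prop[of "{}" c \<sigma>] by simp
    then show ?thesis using e1 e2 f1 by simp
  qed
  show ?thesis
    unfolding ntg_run_def feasible_schedule_def h_def[symmetric]
  proof (intro conjI allI impI)
    fix i assume "i < length \<sigma>" then show "h i \<le> dist (\<sigma>!i)" using hle by blast
  next
    fix v \<tau>
    show "card (forwarded \<sigma> h v \<tau>) \<le> c"
      using key[of v \<tau>] nsel_prop[OF eligible_finite, of c \<sigma>] by (metis min.cobounded1)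
    show "card (forwarded \<sigma> h v \<tau>) = min c (card (eligible \<sigma> h v \<tau>))"
      using key[of v \<tau>] nsel_prop[OF eligible_finite, of c \<sigma>] by metis
    show "\<forall>i\<in>forwarded \<sigma> h v \<tau>. \<forall>j\<in>eligible \<sigma> h v \<tau> - forwarded \<sigma> h v \<tau>.
            dst (\<sigma>!i) \<le> dst (\<sigma>!j)"
      using key[of v \<tau>] nsel_prop[OF eligible_finite, of c \<sigma>] by metis
  qed
qed

definition key :: "request \<Rightarrow> int" where "key r = int (tin r) - int (src r)"

definition Au :: "request list \<Rightarrow> (nat \<Rightarrow> nat) \<Rightarrow> nat \<Rightarrow> int \<Rightarrow> nat \<Rightarrow> nat set" where
  "Au \<sigma> h v D u = {i. i < length \<sigma> \<and> key (\<sigma>!i) = D \<and> src (\<sigma>!i) < v \<and>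
      min (dst (\<sigma>!i)) v \<le> src (\<sigma>!i) + h i \<and> dst (\<sigma>!i) \<le> u}"

definition Rs :: "request list \<Rightarrow> (nat \<Rightarrow> nat) \<Rightarrow> nat \<Rightarrow> int \<Rightarrow> nat \<Rightarrow> nat set" where
  "Rs \<sigma> h v D u = {i. i < length \<sigma> \<and> key (\<sigma>!i) = D \<and> src (\<sigma>!i) < v \<and>
      h i = dist (\<sigma>!i) \<and> dst (\<sigma>!i) \<le> u}"

definition Ns :: "request list \<Rightarrow> nat \<Rightarrow> int \<Rightarrow> nat \<Rightarrow> nat set" where
  "Ns \<sigma> v D u = {i. i < length \<sigma> \<and> key (\<sigma>!i) = D \<and> src (\<sigma>!i) = v \<and> dst (\<sigma>!i) \<le> u}"

lemma fin_Au: "finite (Au \<sigma> h v D u)"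
  by (rule finite_subset[of _ "{..<length \<sigma>}"]) (auto simp: Au_def)
lemma fin_Rs: "finite (Rs \<sigma> h v D u)"
  by (rule finite_subset[of _ "{..<length \<sigma>}"]) (auto simp: Rs_def)
lemma fin_Ns: "finite (Ns \<sigma> v D u)"
  by (rule finite_subset[of _ "{..<length \<sigma>}"]) (auto simp: Ns_def)
lemma fin_fwd: "finite (forwarded \<sigma> h v \<tau>)"
  by (rule finite_subset[of _ "{..<length \<sigma>}"]) (auto simp: forwarded_def present_def)

lemma present_key:
  assumes "i < length \<sigma>" "key (\<sigma>!i) = D" "src (\<sigma>!i) \<le> v" "D + int v = int \<tau>"
  shows "present \<sigma> g v \<tau> i \<longleftrightarrow> v - src (\<sigma>!i) \<le> g i"
  using assms unfolding present_def key_def by auto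

lemma present_key2:
  assumes "present \<sigma> g v \<tau> i" "D + int v = int \<tau>"
  shows "key (\<sigma>!i) = D"
  using assms unfolding present_def key_def by auto

locale optctx =
  fixes \<sigma> :: "request list" and c :: nat and h h' :: "nat \<Rightarrow> nat"
  assumes sd: "\<forall>i<length \<sigma>. src (\<sigma>!i) \<le> dst (\<sigma>!i)"
    and ntg: "ntg_run c \<sigma> h"
    and feas: "feasible_schedule c \<sigma> h'"
begin

lemma hle: "i < length \<sigma> \<Longrightarrow> h i \<le> dst (\<sigma>!i) - src (\<sigma>!i)"
  using ntg unfolding ntg_run_def feasible_schedule_def dist_def by blast

lemma elig_gt: "i \<in> eligible \<sigma> h v \<tau> \<Longrightarrow> v < dst (\<sigma>!i) \<and> src (\<sigma>!i) \<le> v"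
proof -
  assume "i \<in> eligible \<sigma> h v \<tau>"
  then have p: "i < length \<sigma>" "src (\<sigma>!i) \<le> v" "v - src (\<sigma>!i) \<le> h i" "dst (\<sigma>!i) \<noteq> v"
    by (auto simp: eligible_def present_def)
  then show ?thesis using hle[OF p(1)] sd p(1) by auto
qed

lemma fwd_elig: "forwarded \<sigma> h v \<tau> \<subseteq> eligible \<sigma> h v \<tau>"
proof
  fix i assume "i \<in> forwarded \<sigma> h v \<tau>"
  then have p: "present \<sigma> h v \<tau> i" "v - src (\<sigma>!i) < h i" "i < length \<sigma>" "src (\<sigma>!i) \<le> v"
    by (auto simp: forwarded_def present_def)
  then show "i \<in> eligible \<sigma> h v \<tau>" using hle[OF p(3)] by (auto simp: eligible_def)
qed

lemma case1:
  assumes IH: "\<forall>u. card (Rs \<sigma> h' v D u) \<le> card (Au \<sigma> h v D u)"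
    and tau: "D + int v = int \<tau>"
    and hyp: "\<forall>j \<in> eligible \<sigma> h v \<tau> - forwarded \<sigma> h v \<tau>. u < dst (\<sigma>!j)"
  shows "card (Rs \<sigma> h' (Suc v) D u) \<le> card (Au \<sigma> h (Suc v) D u)"
proof -
  have s1: "Rs \<sigma> h' (Suc v) D u \<subseteq> Rs \<sigma> h' v D u \<union> Ns \<sigma> v D u"
    by (auto simp: Rs_def Ns_def)
  have "card (Rs \<sigma> h' (Suc v) D u) \<le> card (Rs \<sigma> h' v D u \<union> Ns \<sigma> v D u)"
    using s1 by (intro card_mono) (auto simp: fin_Rs fin_Ns)
  also have "\<dots> \<le> card (Rs \<sigma> h' v D u) + card (Ns \<sigma> v D u)" by (rule card_Un_le)
  also have "\<dots> \<le> card (Au \<sigma> h v D u) + card (Ns \<sigma> v D u)" using IH by simp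
  also have "\<dots> = card (Au \<sigma> h v D u \<union> Ns \<sigma> v D u)"
    by (rule card_Un_disjoint[symmetric]) (auto simp: fin_Au fin_Ns Au_def Ns_def)
  also have "\<dots> \<le> card (Au \<sigma> h (Suc v) D u)"
  proof (rule card_mono[OF fin_Au], rule subsetI)
    fix i assume i: "i \<in> Au \<sigma> h v D u \<union> Ns \<sigma> v D u"
    then have b: "i < length \<sigma>" "key (\<sigma>!i) = D" "src (\<sigma>!i) \<le> v" "dst (\<sigma>!i) \<le> u"
      by (auto simp: Au_def Ns_def)
    have m: "min (dst (\<sigma>!i)) v \<le> src (\<sigma>!i) + h i"
      using i by (auto simp: Au_def Ns_def)
    have sdi: "src (\<sigma>!i) \<le> dst (\<sigma>!i)" using sd b(1) by blast
    show "i \<in> Au \<sigma> h (Suc v) D u"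
    proof (cases "dst (\<sigma>!i) \<le> v")
      case True
      then show ?thesis using b m by (auto simp: Au_def)
    next
      case False
      then have "v - src (\<sigma>!i) \<le> h i" using m by auto
      then have "present \<sigma> h v \<tau> i" using present_key[OF b(1-3) tau] by blast
      then have "i \<in> eligible \<sigma> h v \<tau>" using False by (simp add: eligible_def)
      then have "i \<in> forwarded \<sigma> h v \<tau>" using hyp b(4) by force
      then have "v - src (\<sigma>!i) < h i" by (simp add: forwarded_def)
      then show ?thesis using b by (auto simp: Au_def)
    qed
  qed
  finally show ?thesis .
qed

lemma step:
  assumes IH: "\<forall>u. card (Rs \<sigma> h' v D u) \<le> card (Au \<sigma> h v D u)"
  shows "card (Rs \<sigma> h' (Suc v) D u) \<le> card (Au \<sigma> h (Suc v) D u)"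
proof (cases "D + int v < 0")
  case True
  have "Rs \<sigma> h' (Suc v) D u = {}" using True by (auto simp: Rs_def key_def)
  then show ?thesis by simp
next
  case False
  define \<tau> where "\<tau> = nat (D + int v)"
  have tau: "D + int v = int \<tau>" using False \<tau>_def by simp
  define E where "E = eligible \<sigma> h v \<tau>"
  define F where "F = forwarded \<sigma> h v \<tau>"
  show ?thesis
  proof (cases "\<forall>j \<in> E - F. u < dst (\<sigma>!j)")
    case True
    then show ?thesis using case1[OF IH tau] E_def F_def by blast
  next
    case False
    then obtain j where j: "j \<in> E - F" "dst (\<sigma>!j) \<le> u" by force
    have FE: "F \<subseteq> E" unfolding E_def F_def by (rule fwd_elig)
    have fE: "finite E" unfolding E_def by (rule eligible_finite)
    have nt: "ntg_run c \<sigma> h" by (rule ntg)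
    have cF: "card F = min c (card E)" and near: "\<forall>i\<in>F. \<forall>j\<in>E - F. dst (\<sigma>!i) \<le> dst (\<sigma>!j)"
      using nt unfolding ntg_run_def E_def F_def by blast+
    have "card F \<noteq> card E"
    proof
      assume "card F = card E"
      then have "F = E" using card_subset_eq[OF fE FE] by blast
      then show False using j by blast
    qed
    then have cFc: "card F = c" using cF by linarith
    have jv: "v < dst (\<sigma>!j)" using j(1) elig_gt unfolding E_def by blast
    have F1: "F \<subseteq> Au \<sigma> h (Suc v) D u"
    proof
      fix i assume i: "i \<in> F"
      then have p: "present \<sigma> h v \<tau> i" "v - src (\<sigma>!i) < h i" by (auto simp: F_def forwarded_def)
      then have b: "i < length \<sigma>" "src (\<sigma>!i) \<le> v" by (auto simp: present_def)
      have k: "key (\<sigma>!i) = D" using present_key2[OF p(1) tau] .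
      have "dst (\<sigma>!i) \<le> u" using near i j by force
      then show "i \<in> Au \<sigma> h (Suc v) D u" using p b k by (auto simp: Au_def)
    qed
    have F2: "\<forall>i\<in>F. v < dst (\<sigma>!i)" using FE elig_gt unfolding E_def by blast
    have "card F + card (Au \<sigma> h (Suc v) D v) = card (F \<union> Au \<sigma> h (Suc v) D v)"
      using F2 by (intro card_Un_disjoint[symmetric]) (auto simp: fin_Au Au_def F_def fin_fwd)
    also have "\<dots> \<le> card (Au \<sigma> h (Suc v) D u)"
      using F1 jv j(2) by (intro card_mono[OF fin_Au]) (auto simp: Au_def)
    finally have A: "c + card (Au \<sigma> h (Suc v) D v) \<le> card (Au \<sigma> h (Suc v) D u)" using cFc by simp
    have hyp': "\<forall>j \<in> eligible \<sigma> h v \<tau> - forwarded \<sigma> h v \<tau>. v < dst (\<sigma>!j)"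
      using elig_gt by blast
    have R1: "card (Rs \<sigma> h' (Suc v) D v) \<le> card (Au \<sigma> h (Suc v) D v)" by (rule case1[OF IH tau hyp'])
    have R2: "Rs \<sigma> h' (Suc v) D u \<subseteq> Rs \<sigma> h' (Suc v) D v \<union> forwarded \<sigma> h' v \<tau>"
    proof
      fix i assume i: "i \<in> Rs \<sigma> h' (Suc v) D u"
      then have b: "i < length \<sigma>" "key (\<sigma>!i) = D" "src (\<sigma>!i) \<le> v" "h' i = dist (\<sigma>!i)"
        by (auto simp: Rs_def)
      show "i \<in> Rs \<sigma> h' (Suc v) D v \<union> forwarded \<sigma> h' v \<tau>"
      proof (cases "dst (\<sigma>!i) \<le> v")
        case True then show ?thesis using i by (auto simp: Rs_def)
      next
        case False
        then have "v - src (\<sigma>!i) < h' i" using b by (auto simp: dist_def)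
        moreover have "present \<sigma> h' v \<tau> i" using present_key[OF b(1-3) tau] calculation by simp
        ultimately show ?thesis by (simp add: forwarded_def)
      qed
    qed
    have cf': "card (forwarded \<sigma> h' v \<tau>) \<le> c" using feas unfolding feasible_schedule_def by blast
    have "card (Rs \<sigma> h' (Suc v) D u) \<le> card (Rs \<sigma> h' (Suc v) D v \<union> forwarded \<sigma> h' v \<tau>)"
      using R2 by (intro card_mono) (auto simp: fin_Rs fin_fwd)
    also have "\<dots> \<le> card (Rs \<sigma> h' (Suc v) D v) + card (forwarded \<sigma> h' v \<tau>)" by (rule card_Un_le)
    finally show ?thesis using R1 cf' A by linarith
  qed
qed

lemma invariant: "card (Rs \<sigma> h' v D u) \<le> card (Au \<sigma> h v D u)"
proof (induction v arbitrary: u)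
  case 0 then show ?case by (simp add: Rs_def)
next
  case (Suc v) then show ?case using step by blast
qed

lemma per_key:
  assumes dn: "\<forall>i<length \<sigma>. dst (\<sigma>!i) < n"
  shows "card {i. i < length \<sigma> \<and> h' i = dist (\<sigma>!i) \<and> key (\<sigma>!i) = D}
       \<le> card {i. i < length \<sigma> \<and> h i = dist (\<sigma>!i) \<and> key (\<sigma>!i) = D}"
proof -
  have a: "\<And>i. i < length \<sigma> \<Longrightarrow> src (\<sigma>!i) < n \<and> dst (\<sigma>!i) \<le> n"
    using dn sd by (meson le_less_trans less_imp_le)
  have "Rs \<sigma> h' n D n = {i. i < length \<sigma> \<and> h' i = dist (\<sigma>!i) \<and> key (\<sigma>!i) = D}"
    using a by (auto simp: Rs_def)
  moreover have "Au \<sigma> h n D n = {i. i < length \<sigma> \<and> h i = dist (\<sigma>!i) \<and> key (\<sigma>!i) = D}"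
  proof (intro equalityI subsetI)
    fix i assume "i \<in> Au \<sigma> h n D n"
    then show "i \<in> {i. i < length \<sigma> \<and> h i = dist (\<sigma>!i) \<and> key (\<sigma>!i) = D}"
      using dn hle[of i] sd by (auto simp: Au_def dist_def min_def split: if_splits)
  next
    fix i assume "i \<in> {i. i < length \<sigma> \<and> h i = dist (\<sigma>!i) \<and> key (\<sigma>!i) = D}"
    then show "i \<in> Au \<sigma> h n D n"
      using a sd by (auto simp: Au_def dist_def min_def)
  qed
  ultimately show ?thesis using invariant[of n D n] by simp
qed

lemma card_by_key:
  "card {i. i < length \<sigma> \<and> P i} =
   (\<Sum>D\<in>(\<lambda>i. key (\<sigma>!i)) ` {..<length \<sigma>}. card {i. i < length \<sigma> \<and> P i \<and> key (\<sigma>!i) = D})"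
proof -
  have "(\<Sum>D\<in>(\<lambda>i. key (\<sigma>!i)) ` {..<length \<sigma>}. sum (\<lambda>_. 1::nat) {x. x \<in> {i. i < length \<sigma> \<and> P i} \<and> key (\<sigma>!x) = D})
      = sum (\<lambda>_. 1) {i. i < length \<sigma> \<and> P i}"
    by (rule sum.group) auto
  then show ?thesis by (simp add: conj_assoc)
qed

lemma opt_le:
  assumes dn: "\<forall>i<length \<sigma>. dst (\<sigma>!i) < n"
  shows "card {i. i < length \<sigma> \<and> h' i = dist (\<sigma>!i)} \<le> card {i. i < length \<sigma> \<and> h i = dist (\<sigma>!i)}"
  unfolding card_by_key[of "\<lambda>i. h' i = dist (\<sigma>!i)"] card_by_key[of "\<lambda>i. h i = dist (\<sigma>!i)"]
  by (rule sum_mono) (rule per_key[OF dn])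

end

lemma thr_eq:
  assumes "\<forall>r \<in> set \<sigma>. valid_request n r"
  shows "throughput \<sigma> g = card {i. i < length \<sigma> \<and> g i = dist (\<sigma>!i)}"
proof -
  have "\<And>i. i < length \<sigma> \<Longrightarrow> enat (tin (\<sigma>!i) + dist (\<sigma>!i)) \<le> ddl (\<sigma>!i)"
    using valid_facts[OF assms] by blast
  then show ?thesis unfolding throughput_def by (intro arg_cong[where f=card]) auto
qed

theorem mainTheorem4:
  fixes n c :: nat and \<sigma> :: "request list"
  assumes "c \<ge> 1"
    and "\<forall>r \<in> set \<sigma>. valid_request n r"
  shows "(\<exists>h. ntg_run c \<sigma> h) \<and>
         (\<forall>h. ntg_run c \<sigma> h \<longrightarrow> throughput \<sigma> h = opt_throughput c \<sigma>)"
proof (intro conjI allI impI)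
  show "\<exists>h. ntg_run c \<sigma> h" using ntg_exists[OF assms(2)] by blast
next
  fix h assume ntg: "ntg_run c \<sigma> h"
  have sd: "\<forall>i<length \<sigma>. src (\<sigma>!i) \<le> dst (\<sigma>!i)" and dn: "\<forall>i<length \<sigma>. dst (\<sigma>!i) < n"
    using valid_facts[OF assms(2)] by blast+
  let ?S = "{throughput \<sigma> h | h. feasible_schedule c \<sigma> h}"
  have fin: "finite ?S"
  proof (rule finite_subset[of _ "{..length \<sigma>}"])
    show "?S \<subseteq> {..length \<sigma>}"
    proof
      fix x assume "x \<in> ?S"
      then obtain g where x: "x = throughput \<sigma> g" by blast
      have "x \<le> card {..<length \<sigma>}" unfolding x throughput_def by (rule card_mono) auto
      then show "x \<in> {..length \<sigma>}" by simp
    qed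
  qed simp
  have mem: "throughput \<sigma> h \<in> ?S" using ntg unfolding ntg_run_def by blast
  have le: "\<forall>y\<in>?S. y \<le> throughput \<sigma> h"
  proof
    fix y assume "y \<in> ?S"
    then obtain g where y: "y = throughput \<sigma> g" and fg: "feasible_schedule c \<sigma> g" by blast
    interpret optctx \<sigma> c h g using sd ntg fg by unfold_locales
    show "y \<le> throughput \<sigma> h" unfolding y thr_eq[OF assms(2)] by (rule opt_le[OF dn])
  qed
  show "throughput \<sigma> h = opt_throughput c \<sigma>"
  proof -
    have "Max ?S = throughput \<sigma> h" using le mem by (intro Max_eqI[OF fin]) auto
    then show ?thesis by (simp add: opt_throughput_def)
  qed
qed

end
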